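(* In the Snapshot model, let $t_1,\dots,t_n\ge t_0$ be distinct times and, for each $k$, let $A_{k,1},\dots,A_{k,m_k}$ be mutually disjoint Borel subsets of $\mathbb{R}^d$. Set $R_{t_k}=N-\sum_{l=1}^{m_k}Q_{t_k}(A_{k,l})$ and $\vec Q_k=(Q_{t_k}(A_{k,1}),\dots,Q_{t_k}(A_{k,m_k}),R_{t_k})$. Then the arrangement $\mathscr{Q}=(\vec Q_k)_{k=1,\dots,n}$ follows an ECM distribution (with $N$ individuals and $m_k+1$ categories at time $k$), i.e. there exist nonnegative numbers $\pi_{l_1,\dots,l_n}$, $l_k\in\{1,\dots,m_k+1\}$, summing to $1$, such that $$\varphi_{\mathscr{Q}}(\xi)=\Big\{\sum_{l_1=1}^{m_1+1}\cdots\sum_{l_n=1}^{m_n+1}e^{i(\xi_{1,l_1}+\cdots+\xi_{n,l_n})}\pi_{l_1,\dots,l_n}\Big\}^N\quad\text{for all }\xi.$$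
   Context: Snapshot model: $X_1,\dots,X_N$ are independent $\mathbb{R}^d$-valued processes indexed by $t\ge t_0$, each distributed as a reference process $X$; $\Phi_t(A)=\sum_{j=1}^N\mathbb{1}_A\{X_j(t)\}$. A detection probability $p\in[0,1]$ is fixed. The count field $Q=\{Q_t(A)\}$ satisfies: (Rule 1) for any distinct times $t_1,\dots,t_n$, the spatial processes $Q_{t_1},\dots,Q_{t_n}$ are mutually independent conditionally on $\Phi$; (Rule 2) for mutually disjoint Borel sets $A_1,\dots,A_n$ and any $t\ge t_0$, the variables $Q_t(A_1),\dots,Q_t(A_n)$ are conditionally independent given $\Phi$, with $Q_t(A_j)$ conditionally binomial with size $\Phi_t(A_j)$ and success probability $p$. ECM distribution: a random arrangement $(Q_{k,l})$ follows an ECM distribution with $N$ individuals and full path probabilities $\pi_{l_1,\dots,l_n}$ if it has the same law as the counts $Q_{k,l}=\#\{j: L^{(j)}_k=l\}$ where $N$ individuals independently choose full paths $(L^{(j)}_1,\dots,L^{(j)}_n)$ with common law $\mathbb{P}(L_1=l_1,\dots,L_n=l_n)=\pi_{l_1,\dots,l_n}$; equivalently its characteristic function has the displayed form. *)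

theory Defs
  imports "HOL-Probability.Probability"
begin

definition Phi :: "nat \<Rightarrow> (nat \<Rightarrow> real \<Rightarrow> 'a \<Rightarrow> 'x) \<Rightarrow> real \<Rightarrow> 'x set \<Rightarrow> 'a \<Rightarrow> nat" where
  "Phi N X t A w = card {j. j < N \<and> X j t w \<in> A}"

text \<open>The sigma-algebra generated by the whole configuration Phi, i.e. by all
  X j t with j < N and t \<ge> t0.\<close>
definition snapshot_sigma ::
  "'a measure \<Rightarrow> nat \<Rightarrow> real \<Rightarrow> (nat \<Rightarrow> real \<Rightarrow> 'a \<Rightarrow> 'x::topological_space) \<Rightarrow> 'a measure" where
  "snapshot_sigma M N t0 X =
     sigma (space M) {X j t -` B \<inter> space M | j t B. j < N \<and> t0 \<le> t \<and> B \<in> sets borel}"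

definition Q_sigma ::
  "'a measure \<Rightarrow> (real \<Rightarrow> 'x::topological_space set \<Rightarrow> 'a \<Rightarrow> nat) \<Rightarrow> real \<Rightarrow> 'a measure" where
  "Q_sigma M Q t = sigma (space M) {Q t A -` {c} \<inter> space M | A c. A \<in> sets borel}"

definition snapshot_rule1 ::
  "'a measure \<Rightarrow> 'a measure \<Rightarrow> (real \<Rightarrow> 'x::topological_space set \<Rightarrow> 'a \<Rightarrow> nat) \<Rightarrow> real \<Rightarrow> bool" where
  "snapshot_rule1 M F Q t0 \<longleftrightarrow>
     (\<forall>(n::nat) (tt::nat \<Rightarrow> real) (E::nat \<Rightarrow> 'a set).
        inj_on tt {..<n} \<and> (\<forall>i<n. t0 \<le> tt i \<and> E i \<in> sets (Q_sigma M Q (tt i))) \<longrightarrow>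
        (AE w in M. real_cond_exp M F (\<lambda>w. \<Prod>i<n. indicator (E i) w) w
                    = (\<Prod>i<n. real_cond_exp M F (indicator (E i)) w)))"

text \<open>Rule 2: for disjoint Borel sets, the counts at a fixed time are conditionally
  independent given F, each conditionally Binomial(Phi_t(A_i), p); stated as
  factorisation of the conditional joint probability mass function.\<close>
definition snapshot_rule2 ::
  "'a measure \<Rightarrow> 'a measure \<Rightarrow> nat \<Rightarrow> (nat \<Rightarrow> real \<Rightarrow> 'a \<Rightarrow> 'x::topological_space)
     \<Rightarrow> (real \<Rightarrow> 'x set \<Rightarrow> 'a \<Rightarrow> nat) \<Rightarrow> real \<Rightarrow> real \<Rightarrow> bool" where
  "snapshot_rule2 M F N X Q p t0 \<longleftrightarrow>
     (\<forall>(t::real) (n::nat) (A::nat \<Rightarrow> 'x set) (c::nat \<Rightarrow> nat).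
        t0 \<le> t \<and> (\<forall>i<n. A i \<in> sets borel) \<and> disjoint_family_on A {..<n} \<longrightarrow>
        (AE w in M. real_cond_exp M F
                      (\<lambda>w. \<Prod>i<n. indicator {v \<in> space M. Q t (A i) v = c i} w) w
                    = (\<Prod>i<n. pmf (binomial_pmf (Phi N X t (A i) w) p) (c i))))"

definition snap_vec ::
  "nat \<Rightarrow> (real \<Rightarrow> 'x set \<Rightarrow> 'a \<Rightarrow> nat) \<Rightarrow> (nat \<Rightarrow> real) \<Rightarrow> (nat \<Rightarrow> nat)
     \<Rightarrow> (nat \<Rightarrow> nat \<Rightarrow> 'x set) \<Rightarrow> nat \<Rightarrow> nat \<Rightarrow> 'a \<Rightarrow> real" where
  "snap_vec N Q t m A k l w =
     (if l \<le> m k then real (Q (t k) (A k l) w)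
      else real N - (\<Sum>l'=1..m k. real (Q (t k) (A k l') w)))"

end

theory Submission
  imports Defs
begin


definition vv :: "nat \<Rightarrow> nat \<Rightarrow> (nat \<Rightarrow> nat) \<Rightarrow> nat \<Rightarrow> real" where
  "vv m N b l = (if l \<le> m then real (b l) else real N - (\<Sum>l'=1..m. real (b l')))"

definition wt :: "(nat \<Rightarrow> 'x set) \<Rightarrow> nat \<Rightarrow> real \<Rightarrow> nat \<Rightarrow> 'x \<Rightarrow> real" where
  "wt A m p l y = (if l \<le> m then p * indicator (A l) y else 1 - p * (\<Sum>l'=1..m. indicator (A l') y))"

lemma binom_gf:
  assumes p: "0 \<le> p" "p \<le> 1" and q: "q \<le> N"
  shows "(\<Sum>s=0..N. complex_of_real (pmf (binomial_pmf q p) s) * z ^ s)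
       = (complex_of_real p * z + complex_of_real (1 - p)) ^ q"
proof -
  have "(\<Sum>s=0..N. complex_of_real (pmf (binomial_pmf q p) s) * z ^ s)
      = (\<Sum>s\<in>{..q}. complex_of_real (pmf (binomial_pmf q p) s) * z ^ s)"
    using q by (intro sum.mono_neutral_right) (auto simp: pmf_binomial[OF p])
  also have "\<dots> = (\<Sum>s\<le>q. of_nat (q choose s) * (complex_of_real p * z) ^ s * (complex_of_real (1 - p)) ^ (q - s))"
    by (intro sum.cong) (auto simp: pmf_binomial[OF p] power_mult_distrib)
  also have "\<dots> = (complex_of_real p * z + complex_of_real (1 - p)) ^ q"
    by (rule binomial_ring[symmetric])
  finally show ?thesis .
qed

lemma vv_sum:
  "(\<Sum>l=1..m+1. \<xi> l * vv m N b l) = \<xi> (m+1) * real N + (\<Sum>l=1..m. (\<xi> l - \<xi> (m+1)) * real (b l))"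
proof -
  have "(\<Sum>l=1..m+1. \<xi> l * vv m N b l) = (\<Sum>l=1..m. \<xi> l * real (b l)) + \<xi> (m+1) * (real N - (\<Sum>l'=1..m. real (b l')))"
    by (simp add: vv_def)
  also have "\<dots> = \<xi> (m+1) * real N + (\<Sum>l=1..m. (\<xi> l - \<xi> (m+1)) * real (b l))"
    by (simp add: algebra_simps sum_subtractf sum_distrib_left)
  finally show ?thesis .
qed

lemma lemA:
  assumes p: "0 \<le> p" "p \<le> 1" and q: "\<And>l. l \<in> {1..m} \<Longrightarrow> q l \<le> N"
  shows "(\<Sum>b\<in>PiE {1..m} (\<lambda>_. {0..N}).
            exp (\<i> * complex_of_real (\<Sum>l=1..m+1. \<xi> l * vv m N b l))
          * complex_of_real (\<Prod>l=1..m. pmf (binomial_pmf (q l) p) (b l)))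
       = exp (\<i> * complex_of_real (\<xi> (m+1))) ^ N *
         (\<Prod>l=1..m. (complex_of_real p * exp (\<i> * complex_of_real (\<xi> l - \<xi> (m+1)))
                      + complex_of_real (1 - p)) ^ q l)"
proof -
  define z where "z l = exp (\<i> * complex_of_real (\<xi> l - \<xi> (m+1)))" for l
  have e: "exp (\<i> * complex_of_real (\<Sum>l=1..m+1. \<xi> l * vv m N b l))
      = exp (\<i> * complex_of_real (\<xi> (m+1))) ^ N * (\<Prod>l=1..m. z l ^ b l)" for b
  proof -
    have "\<i> * complex_of_real (\<Sum>l=1..m+1. \<xi> l * vv m N b l)
        = of_nat N * (\<i> * complex_of_real (\<xi> (m+1))) + (\<Sum>l=1..m. of_nat (b l) * (\<i> * complex_of_real (\<xi> l - \<xi> (m+1))))"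
      unfolding vv_sum by (simp add: algebra_simps sum_distrib_left)
    then show ?thesis
      by (simp add: exp_add exp_sum exp_of_nat_mult z_def)
  qed
  have "(\<Sum>b\<in>PiE {1..m} (\<lambda>_. {0..N}).
            exp (\<i> * complex_of_real (\<Sum>l=1..m+1. \<xi> l * vv m N b l))
          * complex_of_real (\<Prod>l=1..m. pmf (binomial_pmf (q l) p) (b l)))
      = exp (\<i> * complex_of_real (\<xi> (m+1))) ^ N *
        (\<Sum>b\<in>PiE {1..m} (\<lambda>_. {0..N}). \<Prod>l=1..m. complex_of_real (pmf (binomial_pmf (q l) p) (b l)) * z l ^ b l)"
    unfolding e sum_distrib_left
    by (intro sum.cong refl) (simp add: of_real_prod prod.distrib mult_ac)
  also have "(\<Sum>b\<in>PiE {1..m} (\<lambda>_. {0..N}). \<Prod>l=1..m. complex_of_real (pmf (binomial_pmf (q l) p) (b l)) * z l ^ b l)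
     = (\<Prod>l=1..m. \<Sum>s=0..N. complex_of_real (pmf (binomial_pmf (q l) p) s) * z l ^ s)"
    by (rule prod_sum_PiE[symmetric]) auto
  also have "\<dots> = (\<Prod>l=1..m. (complex_of_real p * z l + complex_of_real (1 - p)) ^ q l)"
    by (intro prod.cong refl binom_gf p q) 
  finally show ?thesis by (simp add: z_def)
qed

lemma lemB:
  assumes disj: "disjoint_family_on A {1..m}"
  shows "(\<Sum>l=1..m+1. exp (\<i> * complex_of_real (\<xi> l)) * complex_of_real (wt A m p l y))
       = exp (\<i> * complex_of_real (\<xi> (m+1))) *
         (\<Prod>l=1..m. (if y \<in> A l then complex_of_real p * exp (\<i> * complex_of_real (\<xi> l - \<xi> (m+1)))
                      + complex_of_real (1 - p) else 1))"
proof (cases "\<exists>l0\<in>{1..m}. y \<in> A l0")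
  case True
  then obtain l0 where l0: "l0 \<in> {1..m}" "y \<in> A l0" by blast
  have nin: "y \<notin> A l" if "l \<in> {1..m}" "l \<noteq> l0" for l
    using disj l0 that unfolding disjoint_family_on_def by blast
  have s1: "(\<Sum>l'=1..m. indicator (A l') y) = (1::real)"
    using l0 nin by (subst sum.remove[OF _ l0(1)]) (auto intro!: sum.neutral)
  have s2: "(\<Sum>l=1..m. exp (\<i> * complex_of_real (\<xi> l)) * complex_of_real (wt A m p l y))
      = exp (\<i> * complex_of_real (\<xi> l0)) * complex_of_real p"
    using l0 nin by (subst sum.remove[OF _ l0(1)]) (auto intro!: sum.neutral simp: wt_def)
  have s3: "(\<Prod>l=1..m. (if y \<in> A l then complex_of_real p * exp (\<i> * complex_of_real (\<xi> l - \<xi> (m+1)))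
                      + complex_of_real (1 - p) else 1))
      = complex_of_real p * exp (\<i> * complex_of_real (\<xi> l0 - \<xi> (m+1))) + complex_of_real (1 - p)"
    using l0 nin by (subst prod.remove[OF _ l0(1)]) (auto intro!: prod.neutral)
  have ee: "exp (\<i> * complex_of_real (\<xi> (m+1))) * exp (\<i> * complex_of_real (\<xi> l0 - \<xi> (m+1)))
     = exp (\<i> * complex_of_real (\<xi> l0))"
    by (simp add: exp_add[symmetric] algebra_simps)
  have "(\<Sum>l=1..m+1. exp (\<i> * complex_of_real (\<xi> l)) * complex_of_real (wt A m p l y))
     = exp (\<i> * complex_of_real (\<xi> l0)) * complex_of_real p + exp (\<i> * complex_of_real (\<xi> (m+1))) * complex_of_real (1 - p)"
    using s2 s1 by (simp add: wt_def)
  also have "\<dots> = exp (\<i> * complex_of_real (\<xi> (m+1))) *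
      (complex_of_real p * exp (\<i> * complex_of_real (\<xi> l0 - \<xi> (m+1))) + complex_of_real (1 - p))"
    using ee by (simp add: algebra_simps)
  finally show ?thesis using s3 by simp
next
  case False
  then show ?thesis
    by (auto simp: wt_def indicator_def intro!: sum.neutral prod.neutral)
qed

lemma lemC:
  assumes "finite J"
  shows "(\<Prod>j\<in>J. \<Prod>l\<in>S. (if P j l then a l else 1)) = (\<Prod>l\<in>S. (a l :: 'c::comm_monoid_mult) ^ card {j\<in>J. P j l})"
proof -
  have "(\<Prod>j\<in>J. \<Prod>l\<in>S. (if P j l then a l else 1)) = (\<Prod>l\<in>S. \<Prod>j\<in>J. (if P j l then a l else 1))"
    by (rule prod.swap)
  also have "\<dots> = (\<Prod>l\<in>S. \<Prod>j\<in>{j\<in>J. P j l}. a l)"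
    using assms by (simp add: prod.inter_filter[symmetric])
  finally show ?thesis by simp
qed




lemma ind_prod: "finite I \<Longrightarrow> (\<Prod>i\<in>I. indicator (S i) w :: real) = (if \<forall>i\<in>I. w \<in> S i then 1 else 0)"
  by (induction I rule: finite_induct) (auto simp: indicator_def)

lemma eq_set_meas: "f \<in> M \<rightarrow>\<^sub>M count_space UNIV \<Longrightarrow> {x\<in>space M. f x = a} \<in> sets M"
  using measurable_sets[of f M "count_space UNIV" "{a}"] by (simp add: vimage_def Int_def conj_commute)

lemma Phi_real: "real (Phi N X s B w) = (\<Sum>j<N. indicator B (X j s w))"
proof -
  have "{j. j < N \<and> X j s w \<in> B} = {j\<in>{..<N}. X j s w \<in> B}" by auto
  then have "real (Phi N X s B w) = (\<Sum>j\<in>{j\<in>{..<N}. X j s w \<in> B}. 1)"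
    by (simp add: Phi_def)
  also have "\<dots> = (\<Sum>j<N. if X j s w \<in> B then 1 else 0)"
    by (rule sum.inter_filter) simp
  finally show ?thesis by (simp only: indicator_def of_bool_def)
qed

lemma Phi_le: "Phi N X s B w \<le> N"
proof -
  have "Phi N X s B w \<le> card {..<N}" unfolding Phi_def by (intro card_mono) auto
  then show ?thesis by simp
qed

lemma Phi_meas:
  assumes X: "\<And>j. j < N \<Longrightarrow> X j s \<in> borel_measurable M" and B: "B \<in> sets borel"
  shows "(\<lambda>w. Phi N X s B w) \<in> M \<rightarrow>\<^sub>M count_space UNIV"
proof -
  have m: "(\<lambda>w. \<Sum>j<N. indicator B (X j s w) :: real) \<in> borel_measurable M"
    by (intro borel_measurable_sum) (auto intro!: measurable_compose[OF X borel_measurable_indicator[OF B]])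
  show ?thesis
  proof (subst measurable_count_space_eq2_countable, safe)
    fix a :: nat
    have "(\<lambda>w. Phi N X s B w) -` {a} \<inter> space M = {w\<in>space M. (\<Sum>j<N. indicator B (X j s w)) = real a}"
      using Phi_real[of N X s B] by (auto simp flip: Phi_real)
    also have "\<dots> \<in> sets M" using m by measurable
    finally show "(\<lambda>w. Phi N X s B w) -` {a} \<inter> space M \<in> sets M" .
  qed auto
qed

lemma Phi_fun_meas:
  assumes X: "\<And>j. j < N \<Longrightarrow> X j s \<in> borel_measurable M" and B: "B \<in> sets borel"
  shows "(\<lambda>w. f (Phi N X s B w)) \<in> borel_measurable M"
proof -
  have "(\<lambda>w. Phi N X s B w) \<in> M \<rightarrow>\<^sub>M count_space UNIV" by (rule Phi_meas) (auto intro: X B)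
  then show ?thesis by (rule measurable_compose[of _ _ "count_space UNIV"]) simp
qed

lemma snap_subalg:
  assumes P: "prob_space M" and X: "\<And>j s. j < N \<Longrightarrow> t0 \<le> s \<Longrightarrow> X j s \<in> borel_measurable M"
  shows "sigma_finite_subalgebra M (snapshot_sigma M N t0 X)"
proof -
  interpret prob_space M by fact
  let ?G = "{X j t -` B \<inter> space M | j t B. j < N \<and> t0 \<le> t \<and> B \<in> sets borel}"
  have G: "?G \<subseteq> Pow (space M)" by auto
  have G2: "?G \<subseteq> sets M" using X by (auto intro: measurable_sets)
  have "subalgebra M (snapshot_sigma M N t0 X)"
    unfolding subalgebra_def snapshot_sigma_def
    using G G2 by (auto simp: sets_measure_of space_measure_of_conv intro!: sets.sigma_sets_subset)
  then have "finite_measure_subalgebra M (snapshot_sigma M N t0 X)"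
    by unfold_locales
  then show ?thesis by (rule finite_measure_subalgebra_is_sigma_finite)
qed

lemma Q_sigma_set:
  assumes "\<And>l. l \<in> L \<Longrightarrow> B l \<in> sets borel" "finite L"
  shows "{w\<in>space M. \<forall>l\<in>L. Q s (B l) w = c l} \<in> sets (Q_sigma M Q s)"
proof -
  let ?G = "{Q s A -` {c} \<inter> space M | A c. A \<in> sets borel}"
  have G: "?G \<subseteq> Pow (space M)" by auto
  have sp: "space (Q_sigma M Q s) = space M"
    unfolding Q_sigma_def using G by (simp add: space_measure_of_conv)
  have "{w\<in>space (Q_sigma M Q s). \<forall>l\<in>L. Q s (B l) w = c l} \<in> sets (Q_sigma M Q s)"
  proof (rule sets.sets_Collect_finite_All[OF _ assms(2)])
    fix l assume l: "l \<in> L"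
    have "{w\<in>space (Q_sigma M Q s). Q s (B l) w = c l} = Q s (B l) -` {c l} \<inter> space M"
      using sp by auto
    also have "\<dots> \<in> sets (Q_sigma M Q s)"
      unfolding Q_sigma_def using G assms(1)[OF l]
      by (subst sets_measure_of) (auto intro!: sigma_sets.Basic)
    finally show "{w\<in>space (Q_sigma M Q s). Q s (B l) w = c l} \<in> sets (Q_sigma M Q s)" .
  qed
  then show ?thesis using sp by simp
qed




lemma ball_shift: "(\<forall>l\<in>{1..K::nat}. P l) \<longleftrightarrow> (\<forall>j<K. P (Suc j))"
proof safe
  fix l assume l: "l \<in> {1..K}" and h: "\<forall>j<K. P (Suc j)"
  then have "l - 1 < K" "Suc (l - 1) = l" by auto
  then show "P l" using h by metis
qed auto

locale snap =
  fixes M :: "'a measure"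
    and X :: "nat \<Rightarrow> real \<Rightarrow> 'a \<Rightarrow> real ^ 'd"
    and X0 :: "real \<Rightarrow> 'a \<Rightarrow> real ^ 'd"
    and Q :: "real \<Rightarrow> (real ^ 'd) set \<Rightarrow> 'a \<Rightarrow> nat"
    and N :: nat and p t0 :: real
    and n :: nat and t :: "nat \<Rightarrow> real" and m :: "nat \<Rightarrow> nat"
    and A :: "nat \<Rightarrow> nat \<Rightarrow> (real ^ 'd) set"
  assumes P: "prob_space M"
    and p: "0 \<le> p" "p \<le> 1"
    and X0_meas: "\<And>s. t0 \<le> s \<Longrightarrow> X0 s \<in> borel_measurable M"
    and X_meas: "\<And>j s. j < N \<Longrightarrow> t0 \<le> s \<Longrightarrow> X j s \<in> borel_measurable M"
    and X_indep: "prob_space.indep_vars M (\<lambda>_. Pi\<^sub>M {t0..} (\<lambda>_. borel))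
                    (\<lambda>j w. restrict (\<lambda>s. X j s w) {t0..}) {..<N}"
    and X_ident: "\<And>j. j < N \<Longrightarrow>
        distr M (Pi\<^sub>M {t0..} (\<lambda>_. borel)) (\<lambda>w. restrict (\<lambda>s. X j s w) {t0..})
      = distr M (Pi\<^sub>M {t0..} (\<lambda>_. borel)) (\<lambda>w. restrict (\<lambda>s. X0 s w) {t0..})"
    and Q_meas: "\<And>s B. t0 \<le> s \<Longrightarrow> B \<in> sets borel \<Longrightarrow> Q s B \<in> measurable M (count_space UNIV)"
    and rule1: "snapshot_rule1 M (snapshot_sigma M N t0 X) Q t0"
    and rule2: "snapshot_rule2 M (snapshot_sigma M N t0 X) N X Q p t0"
    and t_dist: "inj_on t {1..n}"
    and t_ge: "\<And>k. k \<in> {1..n} \<Longrightarrow> t0 \<le> t k"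
    and A_borel: "\<And>k l. k \<in> {1..n} \<Longrightarrow> l \<in> {1..m k} \<Longrightarrow> A k l \<in> sets borel"
    and A_disj: "\<And>k. k \<in> {1..n} \<Longrightarrow> disjoint_family_on (A k) {1..m k}"
begin

interpretation prob_space M by (rule P)

abbreviation "F \<equiv> snapshot_sigma M N t0 X"

interpretation S: sigma_finite_subalgebra M F
  by (rule snap_subalg[OF P X_meas])

definition Ev :: "(nat \<Rightarrow> nat \<Rightarrow> nat) \<Rightarrow> 'a set" where
  "Ev c = {w\<in>space M. \<forall>k\<in>{1..n}. \<forall>l\<in>{1..m k}. Q (t k) (A k l) w = c k l}"

definition Pb :: "(nat \<Rightarrow> nat \<Rightarrow> nat) \<Rightarrow> 'a \<Rightarrow> real" where
  "Pb c w = (\<Prod>k=1..n. \<Prod>l=1..m k. pmf (binomial_pmf (Phi N X (t k) (A k l) w) p) (c k l))"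

lemma Ev_sets: "Ev c \<in> sets M"
  unfolding Ev_def
  by (intro sets.sets_Collect_finite_All eq_set_meas Q_meas t_ge A_borel) auto

lemma Pb_meas: "Pb c \<in> borel_measurable M"
  unfolding Pb_def
  by (intro borel_measurable_prod Phi_fun_meas X_meas t_ge A_borel) auto

lemma Pb_nonneg: "0 \<le> Pb c w"
  unfolding Pb_def by (intro prod_nonneg) auto

lemma Pb_le1: "Pb c w \<le> 1"
  unfolding Pb_def by (intro prod_le_1 conjI prod_nonneg pmf_le_1 pmf_nonneg)

lemma Pb_int: "integrable M (Pb c)"
  by (rule integrable_const_bound[where B=1]) (auto simp: Pb_nonneg Pb_le1 Pb_meas)

lemma step1: "measure M (Ev c) = (\<integral>w. Pb c w \<partial>M)"
proof -
  define Ek where "Ek k = {w\<in>space M. \<forall>l\<in>{1..m k}. Q (t k) (A k l) w = c k l}" for k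
  have Ek_Q: "Ek k \<in> sets (Q_sigma M Q (t k))" if "k \<in> {1..n}" for k
    unfolding Ek_def by (rule Q_sigma_set) (auto intro: A_borel that)
  have Ek_sets: "Ek k \<in> sets M" if "k \<in> {1..n}" for k
    unfolding Ek_def
    by (intro sets.sets_Collect_finite_All eq_set_meas Q_meas t_ge A_borel that) auto
  have inj: "inj_on (\<lambda>i. t (Suc i)) {..<n}"
  proof (rule inj_onI)
    fix i j assume ij: "i \<in> {..<n}" "j \<in> {..<n}" "t (Suc i) = t (Suc j)"
    have "Suc i \<in> {1..n}" "Suc j \<in> {1..n}" using ij(1,2) by auto
    from inj_onD[OF t_dist ij(3) this] show "i = j" by simp
  qed
  have r1: "AE w in M. real_cond_exp M F (\<lambda>w. \<Prod>i<n. indicator (Ek (Suc i)) w) w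
                    = (\<Prod>i<n. real_cond_exp M F (indicator (Ek (Suc i))) w)"
  proof -
    have h1: "inj_on (\<lambda>i. t (Suc i)) {..<n} \<and> (\<forall>i<n. t0 \<le> t (Suc i) \<and> Ek (Suc i) \<in> sets (Q_sigma M Q (t (Suc i))))"
      using inj t_ge Ek_Q by auto
    show ?thesis
      by (rule rule1[unfolded snapshot_rule1_def, THEN spec[where x=n], THEN spec[where x="\<lambda>i. t (Suc i)"],
            THEN spec[where x="\<lambda>i. Ek (Suc i)"], THEN mp, OF h1])
  qed
  have r2: "AE w in M. real_cond_exp M F (indicator (Ek (Suc i))) w
     = (\<Prod>j<m (Suc i). pmf (binomial_pmf (Phi N X (t (Suc i)) (A (Suc i) (Suc j)) w) p) (c (Suc i) (Suc j)))"
    if i: "i < n" for i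
  proof -
    let ?k = "Suc i"
    have k: "?k \<in> {1..n}" using i by auto
    have a: "AE w in M. real_cond_exp M F
                      (\<lambda>w. \<Prod>j<m ?k. indicator {v \<in> space M. Q (t ?k) (A ?k (Suc j)) v = c ?k (Suc j)} w) w
                    = (\<Prod>j<m ?k. pmf (binomial_pmf (Phi N X (t ?k) (A ?k (Suc j)) w) p) (c ?k (Suc j)))"
    proof -
      have h2: "t0 \<le> t ?k \<and> (\<forall>j<m ?k. A ?k (Suc j) \<in> sets borel) \<and> disjoint_family_on (\<lambda>j. A ?k (Suc j)) {..<m ?k}"
        using t_ge[OF k] A_borel[OF k] A_disj[OF k] by (auto simp: disjoint_family_on_def)
      show ?thesis
        by (rule rule2[unfolded snapshot_rule2_def, THEN spec[where x="t ?k"], THEN spec[where x="m ?k"],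
            THEN spec[where x="\<lambda>j. A ?k (Suc j)"], THEN spec[where x="\<lambda>j. c ?k (Suc j)"], THEN mp, OF h2])
    qed
    have m1: "(\<lambda>w. \<Prod>j<m ?k. indicator {v \<in> space M. Q (t ?k) (A ?k (Suc j)) v = c ?k (Suc j)} w :: real) \<in> borel_measurable M"
      by (intro borel_measurable_prod borel_measurable_indicator eq_set_meas Q_meas t_ge A_borel k) auto
    have b: "AE w in M. real_cond_exp M F (indicator (Ek ?k)) w = real_cond_exp M F
                      (\<lambda>w. \<Prod>j<m ?k. indicator {v \<in> space M. Q (t ?k) (A ?k (Suc j)) v = c ?k (Suc j)} w) w"
    proof (rule S.real_cond_exp_cong)
      show "AE w in M. indicator (Ek ?k) w = (\<Prod>j<m ?k. indicator {v \<in> space M. Q (t ?k) (A ?k (Suc j)) v = c ?k (Suc j)} w :: real)"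
      proof (rule AE_I2)
        fix w assume w: "w \<in> space M"
        have "(\<forall>l\<in>{1..m ?k}. Q (t ?k) (A ?k l) w = c ?k l) \<longleftrightarrow> (\<forall>j<m ?k. Q (t ?k) (A ?k (Suc j)) w = c ?k (Suc j))"
          by (rule ball_shift)
        then show "indicator (Ek ?k) w = (\<Prod>j<m ?k. indicator {v \<in> space M. Q (t ?k) (A ?k (Suc j)) v = c ?k (Suc j)} w :: real)"
          using w by (auto simp: ind_prod Ek_def indicator_def)
      qed
    qed (auto intro!: borel_measurable_indicator Ek_sets[OF k] m1)
    show ?thesis using a b by eventually_elim simp
  qed
  have r2all: "AE w in M. \<forall>i\<in>{..<n}. real_cond_exp M F (indicator (Ek (Suc i))) w
     = (\<Prod>j<m (Suc i). pmf (binomial_pmf (Phi N X (t (Suc i)) (A (Suc i) (Suc j)) w) p) (c (Suc i) (Suc j)))"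
    by (rule eventually_ball_finite) (auto intro: r2)
  have mprod: "(\<lambda>w. \<Prod>i<n. indicator (Ek (Suc i)) w :: real) \<in> borel_measurable M"
    by (intro borel_measurable_prod borel_measurable_indicator Ek_sets) auto
  have r0: "AE w in M. real_cond_exp M F (indicator (Ev c)) w = real_cond_exp M F (\<lambda>w. \<Prod>i<n. indicator (Ek (Suc i)) w) w"
  proof (rule S.real_cond_exp_cong)
    show "AE w in M. indicator (Ev c) w = (\<Prod>i<n. indicator (Ek (Suc i)) w :: real)"
    proof (rule AE_I2)
      fix w assume w: "w \<in> space M"
      have "(\<forall>k\<in>{1..n}. \<forall>l\<in>{1..m k}. Q (t k) (A k l) w = c k l) \<longleftrightarrow> (\<forall>i<n. w \<in> Ek (Suc i))"
        using w unfolding Ek_def ball_shift[of n] by auto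
      then show "indicator (Ev c) w = (\<Prod>i<n. indicator (Ek (Suc i)) w :: real)"
        using w by (auto simp: ind_prod Ev_def indicator_def)
    qed
  qed (auto intro!: borel_measurable_indicator Ev_sets mprod)
  have ae: "AE w in M. real_cond_exp M F (indicator (Ev c)) w = Pb c w"
    using r0 r1 r2all
  proof eventually_elim
    case (elim w)
    then show ?case
      by (simp add: Pb_def prod.atLeast1_atMost_eq One_nat_def)
  qed
  have "measure M (Ev c) = (\<integral>w. indicator (Ev c) w \<partial>M)"
    using Ev_sets by (simp add: Ev_def Int_absorb2)
  also have "\<dots> = (\<integral>w. real_cond_exp M F (indicator (Ev c)) w \<partial>M)"
    by (rule S.real_cond_exp_int(2)[symmetric], rule integrable_real_indicator[OF Ev_sets]) (simp add: less_top[symmetric])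
  also have "\<dots> = (\<integral>w. Pb c w \<partial>M)"
    by (rule integral_cong_AE) (auto intro: ae Pb_meas)
  finally show ?thesis .
qed

end



lemma pmf_binom_sum:
  assumes p: "0 \<le> p" "p \<le> 1" and q: "q \<le> N"
  shows "(\<Sum>s=0..N. pmf (binomial_pmf q p) s) = 1"
proof -
  have "(\<Sum>s=0..N. pmf (binomial_pmf q p) s) = (\<Sum>s\<in>{..q}. pmf (binomial_pmf q p) s)"
    using q by (intro sum.mono_neutral_right) (auto simp: pmf_binomial[OF p])
  also have "\<dots> = (\<Sum>s\<le>q. of_nat (q choose s) * p ^ s * (1 - p) ^ (q - s))"
    by (intro sum.cong) (auto simp: pmf_binomial[OF p])
  also have "\<dots> = (p + (1 - p)) ^ q"
    by (rule binomial_ring[symmetric])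
  finally show ?thesis by simp
qed

context snap
begin

interpretation prob_space M by (rule P)

definition Box :: "(nat \<Rightarrow> nat \<Rightarrow> nat) set" where
  "Box = PiE {1..n} (\<lambda>k. PiE {1..m k} (\<lambda>_. {0..N}))"

lemma Box_finite: "finite Box"
  unfolding Box_def by (intro finite_PiE) auto

lemma Pb_sum: "(\<Sum>c\<in>Box. Pb c w) = 1"
proof -
  have "(\<Sum>c\<in>Box. Pb c w) = (\<Prod>k=1..n. \<Sum>b\<in>PiE {1..m k} (\<lambda>_. {0..N}).
            \<Prod>l=1..m k. pmf (binomial_pmf (Phi N X (t k) (A k l) w) p) (b l))"
    unfolding Pb_def Box_def
    by (rule prod_sum_PiE[where f="\<lambda>k b. \<Prod>l=1..m k. pmf (binomial_pmf (Phi N X (t k) (A k l) w) p) (b l)", symmetric]) (auto intro!: finite_PiE)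
  also have "\<dots> = (\<Prod>k=1..n. \<Prod>l=1..m k. \<Sum>s=0..N. pmf (binomial_pmf (Phi N X (t k) (A k l) w) p) s)"
    by (intro prod.cong refl prod_sum_PiE[symmetric]) (auto intro!: finite_PiE)
  also have "\<dots> = 1"
    by (intro prod.neutral ballI pmf_binom_sum p Phi_le)
  finally show ?thesis .
qed

lemma Box_disj: "disjoint_family_on Ev Box"
proof (unfold disjoint_family_on_def, safe)
  fix c c' w assume c: "c \<in> Box" "c' \<in> Box" "c \<noteq> c'" and w: "w \<in> Ev c" "w \<in> Ev c'"
  have "c = c'"
  proof (rule PiE_ext[OF c(1)[unfolded Box_def] c(2)[unfolded Box_def]])
    fix k assume k: "k \<in> {1..n}"
    show "c k = c' k"
      by (rule PiE_ext[of _ "{1..m k}" "\<lambda>_. {0..N}"]) (use c k w in \<open>auto simp: Box_def Ev_def\<close>)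
  qed
  with c show "w \<in> {}" by simp
qed

lemma AE_cover: "AE w in M. \<exists>c\<in>Box. w \<in> Ev c"
proof -
  have "prob (\<Union>c\<in>Box. Ev c) = (\<Sum>c\<in>Box. prob (Ev c))"
    by (rule finite_measure_finite_Union[OF Box_finite _ Box_disj]) (auto intro: Ev_sets)
  also have "\<dots> = (\<Sum>c\<in>Box. \<integral>w. Pb c w \<partial>M)"
    by (simp add: step1)
  also have "\<dots> = (\<integral>w. (\<Sum>c\<in>Box. Pb c w) \<partial>M)"
    by (rule Bochner_Integration.integral_sum[symmetric]) (rule Pb_int)
  also have "\<dots> = 1" by (simp add: Pb_sum prob_space)
  finally have "prob (\<Union>c\<in>Box. Ev c) = 1" .
  then have "AE w in M. w \<in> (\<Union>c\<in>Box. Ev c)" by (rule AE_prob_1)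
  then show ?thesis by simp
qed

end



context snap
begin

interpretation prob_space M by (rule P)

definition g :: "(nat \<Rightarrow> nat \<Rightarrow> real) \<Rightarrow> nat \<Rightarrow> real ^ 'd \<Rightarrow> complex" where
  "g \<xi> k y = (\<Sum>l=1..m k+1. exp (\<i> * complex_of_real (\<xi> k l)) * complex_of_real (wt (A k) (m k) p l y))"

definition phi :: "(nat \<Rightarrow> nat \<Rightarrow> real) \<Rightarrow> (nat \<Rightarrow> nat \<Rightarrow> nat) \<Rightarrow> real" where
  "phi \<xi> c = (\<Sum>k=1..n. \<Sum>l=1..m k+1. \<xi> k l * vv (m k) N (c k) l)"

lemma g_prod:
  assumes k: "k \<in> {1..n}"
  shows "(\<Prod>j<N. g \<xi> k (X j (t k) w)) = exp (\<i> * complex_of_real (\<xi> k (m k+1))) ^ N *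
         (\<Prod>l=1..m k. (complex_of_real p * exp (\<i> * complex_of_real (\<xi> k l - \<xi> k (m k+1)))
                      + complex_of_real (1 - p)) ^ Phi N X (t k) (A k l) w)"
proof -
  let ?e = "exp (\<i> * complex_of_real (\<xi> k (m k+1)))"
  let ?a = "\<lambda>l. complex_of_real p * exp (\<i> * complex_of_real (\<xi> k l - \<xi> k (m k+1))) + complex_of_real (1 - p)"
  have "(\<Prod>j<N. g \<xi> k (X j (t k) w)) = (\<Prod>j<N. ?e * (\<Prod>l=1..m k. if X j (t k) w \<in> A k l then ?a l else 1))"
    unfolding g_def by (intro prod.cong refl lemB[OF A_disj[OF k]])
  also have "\<dots> = ?e ^ N * (\<Prod>j<N. \<Prod>l=1..m k. if X j (t k) w \<in> A k l then ?a l else 1)"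
    by (simp add: prod.distrib)
  also have "(\<Prod>j<N. \<Prod>l=1..m k. if X j (t k) w \<in> A k l then ?a l else 1)
      = (\<Prod>l=1..m k. ?a l ^ card {j\<in>{..<N}. X j (t k) w \<in> A k l})"
    by (rule lemC) simp
  also have "\<dots> = (\<Prod>l=1..m k. ?a l ^ Phi N X (t k) (A k l) w)"
  proof -
    have "{j\<in>{..<N}. X j (t k) w \<in> A k l} = {j. j < N \<and> X j (t k) w \<in> A k l}" for l by auto
    then show ?thesis by (simp add: Phi_def)
  qed
  finally show ?thesis .
qed

lemma lemD:
  "(\<Sum>c\<in>Box. complex_of_real (Pb c w) * exp (\<i> * complex_of_real (phi \<xi> c)))
   = (\<Prod>k=1..n. \<Prod>j<N. g \<xi> k (X j (t k) w))"
proof -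
  define F where "F k b = exp (\<i> * complex_of_real (\<Sum>l=1..m k+1. \<xi> k l * vv (m k) N b l))
          * complex_of_real (\<Prod>l=1..m k. pmf (binomial_pmf (Phi N X (t k) (A k l) w) p) (b l))" for k b
  have "complex_of_real (Pb c w) * exp (\<i> * complex_of_real (phi \<xi> c)) = (\<Prod>k=1..n. F k (c k))" for c
  proof -
    have "exp (\<i> * complex_of_real (phi \<xi> c)) = (\<Prod>k=1..n. exp (\<i> * complex_of_real (\<Sum>l=1..m k+1. \<xi> k l * vv (m k) N (c k) l)))"
      unfolding phi_def of_real_sum sum_distrib_left by (rule exp_sum) simp
    moreover have "complex_of_real (Pb c w) = (\<Prod>k=1..n. complex_of_real (\<Prod>l=1..m k. pmf (binomial_pmf (Phi N X (t k) (A k l) w) p) (c k l)))"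
      unfolding Pb_def by (rule of_real_prod)
    ultimately show ?thesis by (simp add: F_def prod.distrib mult_ac)
  qed
  then have "(\<Sum>c\<in>Box. complex_of_real (Pb c w) * exp (\<i> * complex_of_real (phi \<xi> c)))
      = (\<Sum>c\<in>Box. \<Prod>k=1..n. F k (c k))" by simp
  also have "\<dots> = (\<Prod>k=1..n. \<Sum>b\<in>PiE {1..m k} (\<lambda>_. {0..N}). F k b)"
    unfolding Box_def by (rule prod_sum_PiE[symmetric]) (auto intro!: finite_PiE)
  also have "\<dots> = (\<Prod>k=1..n. \<Prod>j<N. g \<xi> k (X j (t k) w))"
  proof (rule prod.cong[OF refl])
    fix k assume k: "k \<in> {1..n}"
    show "(\<Sum>b\<in>PiE {1..m k} (\<lambda>_. {0..N}). F k b) = (\<Prod>j<N. g \<xi> k (X j (t k) w))"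
      unfolding g_prod[OF k] F_def
      by (rule lemA[OF p]) (rule Phi_le)
  qed
  finally show ?thesis .
qed

lemma snap_vec_vv:
  assumes w: "w \<in> Ev c" and k: "k \<in> {1..n}" and l: "l \<in> {1..m k+1}"
  shows "snap_vec N Q t m A k l w = vv (m k) N (c k) l"
proof -
  have Qc: "Q (t k) (A k l') w = c k l'" if "l' \<in> {1..m k}" for l'
    using w k that by (auto simp: Ev_def)
  show ?thesis
    using l Qc by (auto simp: snap_vec_def vv_def intro!: sum.cong)
qed

lemma sv_meas:
  assumes k: "k \<in> {1..n}" and l: "l \<in> {1..m k+1}"
  shows "(\<lambda>w. snap_vec N Q t m A k l w) \<in> borel_measurable M"
proof -
  have qm: "(\<lambda>w. real (Q (t k) (A k l') w)) \<in> borel_measurable M" if "l' \<in> {1..m k}" for l'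
    by (rule measurable_compose[of _ _ "count_space UNIV"], rule Q_meas[OF t_ge[OF k] A_borel[OF k that]]) simp
  show ?thesis
  proof (cases "l \<le> m k")
    case True
    then show ?thesis using l qm unfolding snap_vec_def by simp
  next
    case False
    then show ?thesis unfolding snap_vec_def
      by (simp, intro borel_measurable_diff borel_measurable_const borel_measurable_sum qm, simp)
  qed
qed

end



context snap
begin

interpretation prob_space M by (rule P)

lemma step4:
  "(LINT w|M. exp (\<i> * complex_of_real
                   (\<Sum>k=1..n. \<Sum>l=1..m k + 1. \<xi> k l * snap_vec N Q t m A k l w)))
   = (LINT w|M. (\<Prod>k=1..n. \<Prod>j<N. g \<xi> k (X j (t k) w)))"
proof -
  let ?E = "\<lambda>c. exp (\<i> * complex_of_real (phi \<xi> c))"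
  have lm: "(\<lambda>w. \<Sum>k=1..n. \<Sum>l=1..m k + 1. \<xi> k l * snap_vec N Q t m A k l w) \<in> borel_measurable M"
    by (intro borel_measurable_sum borel_measurable_times borel_measurable_const sv_meas) auto
  have m1: "(\<lambda>w. exp (\<i> * complex_of_real
                   (\<Sum>k=1..n. \<Sum>l=1..m k + 1. \<xi> k l * snap_vec N Q t m A k l w))) \<in> borel_measurable M"
    using lm by measurable
  have ind_int: "integrable M (\<lambda>w. complex_of_real (indicator (Ev c) w) * ?E c)" for c
    by (intro integrable_mult_left integrable_of_real integrable_real_indicator Ev_sets)
       (simp add: less_top[symmetric])
  have Pb_int': "integrable M (\<lambda>w. complex_of_real (Pb c w) * ?E c)" for c
    by (intro integrable_mult_left integrable_of_real Pb_int)
  have ae: "AE w in M. exp (\<i> * complex_of_real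
                   (\<Sum>k=1..n. \<Sum>l=1..m k + 1. \<xi> k l * snap_vec N Q t m A k l w))
            = (\<Sum>c\<in>Box. complex_of_real (indicator (Ev c) w) * ?E c)"
    using AE_cover
  proof eventually_elim
    case (elim w)
    then obtain c0 where c0: "c0 \<in> Box" "w \<in> Ev c0" by blast
    have "(\<Sum>c\<in>Box. complex_of_real (indicator (Ev c) w) * ?E c) = ?E c0"
    proof -
      have "w \<notin> Ev c" if "c \<in> Box - {c0}" for c
        using Box_disj c0 that unfolding disjoint_family_on_def by blast
      then have "(\<Sum>c\<in>Box - {c0}. complex_of_real (indicator (Ev c) w) * ?E c) = 0"
        by (intro sum.neutral) auto
      then show ?thesis
        using c0 by (subst sum.remove[OF Box_finite c0(1)]) auto
    qed
    moreover have "(\<Sum>k=1..n. \<Sum>l=1..m k + 1. \<xi> k l * snap_vec N Q t m A k l w) = phi \<xi> c0"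
      unfolding phi_def by (intro sum.cong refl) (simp add: snap_vec_vv[OF c0(2)])
    ultimately show ?case by simp
  qed
  have "(LINT w|M. exp (\<i> * complex_of_real
                   (\<Sum>k=1..n. \<Sum>l=1..m k + 1. \<xi> k l * snap_vec N Q t m A k l w)))
      = (LINT w|M. (\<Sum>c\<in>Box. complex_of_real (indicator (Ev c) w) * ?E c))"
    by (rule integral_cong_AE[OF m1 _ ae]) (intro borel_measurable_integrable Bochner_Integration.integrable_sum ind_int)
  also have "\<dots> = (\<Sum>c\<in>Box. LINT w|M. complex_of_real (indicator (Ev c) w) * ?E c)"
    by (rule Bochner_Integration.integral_sum) (rule ind_int)
  also have "\<dots> = (\<Sum>c\<in>Box. complex_of_real (measure M (Ev c)) * ?E c)"
    using Ev_sets by (simp add: Int_absorb2 sets.sets_into_space)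
  also have "\<dots> = (\<Sum>c\<in>Box. LINT w|M. complex_of_real (Pb c w) * ?E c)"
    by (simp add: step1)
  also have "\<dots> = (LINT w|M. (\<Sum>c\<in>Box. complex_of_real (Pb c w) * ?E c))"
    by (rule Bochner_Integration.integral_sum[symmetric]) (rule Pb_int')
  also have "\<dots> = (LINT w|M. (\<Prod>k=1..n. \<Prod>j<N. g \<xi> k (X j (t k) w)))"
    by (simp add: lemD)
  finally show ?thesis .
qed

end



lemma ind_sum_le1:
  assumes "disjoint_family_on A {1..m::nat}"
  shows "(\<Sum>l=1..m. indicator (A l) y) \<le> (1::real)"
proof -
  have "(\<Sum>l=1..m. indicator (A l) y) = (indicator (\<Union>(A ` {1..m})) y :: real)"
    by (rule indicator_UN_disjoint[symmetric]) (use assms in auto)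
  then show ?thesis by (simp add: indicator_def)
qed

lemma wt_sum: "(\<Sum>l=1..m+1. wt A m p l y) = 1"
proof -
  have "(\<Sum>l=1..m. wt A m p l y) = p * (\<Sum>l=1..m. indicator (A l) y)"
    by (simp add: wt_def sum_distrib_left)
  then show ?thesis by (simp add: wt_def)
qed

lemma wt_nonneg:
  assumes "disjoint_family_on A {1..m::nat}" "0 \<le> p" "p \<le> 1"
  shows "0 \<le> wt A m p l y"
proof (cases "l \<le> m")
  case True then show ?thesis using assms by (simp add: wt_def)
next
  case False
  have s: "(\<Sum>l=1..m. indicator (A l) y) \<le> (1::real)" by (rule ind_sum_le1[OF assms(1)])
  have "0 \<le> (\<Sum>l=1..m. indicator (A l) y :: real)" by (intro sum_nonneg) simp
  then have "p * (\<Sum>l=1..m. indicator (A l) y) \<le> 1 * 1"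
    using s assms by (intro mult_mono) auto
  then show ?thesis using False by (simp add: wt_def)
qed

lemma wt_meas:
  assumes "\<And>l'. l' \<in> {1..m} \<Longrightarrow> A l' \<in> sets borel" "l \<in> {1..m+1}"
  shows "wt A m p l \<in> borel_measurable borel"
proof (cases "l \<le> m")
  case True
  then have "A l \<in> sets borel" using assms by auto
  then show ?thesis using True unfolding wt_def by simp
next
  case False
  have "(\<lambda>y. \<Sum>l'=1..m. indicator (A l') y :: real) \<in> borel_measurable borel"
    by (intro borel_measurable_sum borel_measurable_indicator assms(1))
  then show ?thesis using False unfolding wt_def by simp
qed

context snap
begin

interpretation prob_space M by (rule P)

definition H :: "(nat \<Rightarrow> nat \<Rightarrow> real) \<Rightarrow> (real \<Rightarrow> real ^ 'd) \<Rightarrow> complex" where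
  "H \<xi> x = (\<Prod>k=1..n. g \<xi> k (x (t k)))"

lemma g_norm: "k \<in> {1..n} \<Longrightarrow> norm (g \<xi> k y) \<le> 1"
proof -
  assume k: "k \<in> {1..n}"
  have "norm (g \<xi> k y) \<le> (\<Sum>l=1..m k+1. norm (exp (\<i> * complex_of_real (\<xi> k l)) * complex_of_real (wt (A k) (m k) p l y)))"
    unfolding g_def by (rule norm_sum)
  also have "\<dots> = (\<Sum>l=1..m k+1. wt (A k) (m k) p l y)"
    by (intro sum.cong refl) (simp add: norm_mult wt_nonneg[OF A_disj[OF k] p])
  also have "\<dots> = 1" by (rule wt_sum)
  finally show ?thesis .
qed

lemma g_meas: "k \<in> {1..n} \<Longrightarrow> g \<xi> k \<in> borel_measurable borel"
  unfolding g_def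
  by (intro borel_measurable_sum borel_measurable_times borel_measurable_const
        measurable_compose[OF wt_meas borel_measurable_of_real]) (auto intro: A_borel)

lemma H_norm: "norm (H \<xi> x) \<le> 1"
proof -
  have "norm (H \<xi> x) \<le> (\<Prod>k=1..n. norm (g \<xi> k (x (t k))))"
    unfolding H_def by (rule norm_prod_le)
  also have "\<dots> \<le> 1"
    by (intro prod_le_1 conjI norm_ge_zero g_norm) auto
  finally show ?thesis .
qed

lemma H_meas: "H \<xi> \<in> borel_measurable (Pi\<^sub>M {t0..} (\<lambda>_. borel))"
  unfolding H_def
proof (intro borel_measurable_prod)
  fix k assume k: "k \<in> {1..n}"
  show "(\<lambda>x. g \<xi> k (x (t k))) \<in> borel_measurable (Pi\<^sub>M {t0..} (\<lambda>_. borel))"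
    apply (rule measurable_compose[of "\<lambda>x. x (t k)" _ borel])
     apply (rule measurable_component_singleton[of "t k" "{t0..}" "\<lambda>_. borel"])
    using t_ge[OF k] apply simp
    by (rule g_meas[OF k])
qed

lemma Y_meas:
  assumes "\<And>s. t0 \<le> s \<Longrightarrow> Z s \<in> borel_measurable M"
  shows "(\<lambda>w. restrict (\<lambda>s. Z s w) {t0..}) \<in> M \<rightarrow>\<^sub>M Pi\<^sub>M {t0..} (\<lambda>_. borel)"
  by (rule measurable_restrict) (use assms in auto)

lemma step5:
  "(LINT w|M. (\<Prod>k=1..n. \<Prod>j<N. g \<xi> k (X j (t k) w)))
   = (LINT w|M. H \<xi> (restrict (\<lambda>s. X0 s w) {t0..})) ^ N"
proof -
  let ?Y = "\<lambda>j w. restrict (\<lambda>s. X j s w) {t0..}"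
  let ?Z = "\<lambda>w. restrict (\<lambda>s. X0 s w) {t0..}"
  have Ym: "?Y j \<in> M \<rightarrow>\<^sub>M Pi\<^sub>M {t0..} (\<lambda>_. borel)" if "j < N" for j
    by (rule Y_meas) (rule X_meas[OF that])
  have Y0m: "?Z \<in> M \<rightarrow>\<^sub>M Pi\<^sub>M {t0..} (\<lambda>_. borel)"
    by (rule Y_meas) (rule X0_meas)
  have HY_int: "integrable M (\<lambda>w. H \<xi> (?Y j w))" if "j < N" for j
    by (rule integrable_const_bound[where B=1]) (auto intro: H_norm measurable_compose[OF Ym[OF that] H_meas])
  have eq1: "(\<Prod>k=1..n. \<Prod>j<N. g \<xi> k (X j (t k) w)) = (\<Prod>j<N. H \<xi> (?Y j w))" for w
  proof -
    have "(\<Prod>k=1..n. \<Prod>j<N. g \<xi> k (X j (t k) w)) = (\<Prod>j<N. \<Prod>k=1..n. g \<xi> k (X j (t k) w))"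
      by (rule prod.swap)
    also have "\<dots> = (\<Prod>j<N. H \<xi> (?Y j w))"
      unfolding H_def by (intro prod.cong refl) (use t_ge in auto)
    finally show ?thesis .
  qed
  have ind: "indep_vars (\<lambda>_. borel) (\<lambda>j w. H \<xi> (?Y j w)) {..<N}"
    by (rule indep_vars_compose2[OF X_indep]) (rule H_meas)
  have "(LINT w|M. (\<Prod>k=1..n. \<Prod>j<N. g \<xi> k (X j (t k) w))) = (LINT w|M. (\<Prod>j<N. H \<xi> (?Y j w)))"
    unfolding eq1 by (rule refl)
  also have "\<dots> = (\<Prod>j<N. LINT w|M. H \<xi> (?Y j w))"
    by (rule indep_vars_lebesgue_integral[OF _ ind]) (auto intro: HY_int)
  also have "\<dots> = (\<Prod>j<N. LINT w|M. H \<xi> (?Z w))"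
  proof (intro prod.cong refl)
    fix j assume j: "j \<in> {..<N}"
    have "(LINT w|M. H \<xi> (?Y j w)) = integral\<^sup>L (distr M (Pi\<^sub>M {t0..} (\<lambda>_. borel)) (?Y j)) (H \<xi>)"
      using j by (intro integral_distr[OF Ym H_meas, symmetric]) simp
    also have "\<dots> = integral\<^sup>L (distr M (Pi\<^sub>M {t0..} (\<lambda>_. borel)) ?Z) (H \<xi>)"
      using X_ident j by simp
    also have "\<dots> = (LINT w|M. H \<xi> (?Z w))"
      by (rule integral_distr[OF Y0m H_meas])
    finally show "(LINT w|M. H \<xi> (?Y j w)) = (LINT w|M. H \<xi> (?Z w))" .
  qed
  also have "\<dots> = (LINT w|M. H \<xi> (?Z w)) ^ N" by simp
  finally show ?thesis .
qed

end



lemma wt_le1: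
  assumes "0 \<le> p" "p \<le> 1"
  shows "wt A m p l y \<le> 1"
proof (cases "l \<le> m")
  case True then show ?thesis using assms by (simp add: wt_def indicator_def)
next
  case False
  have "0 \<le> (\<Sum>l=1..m. indicator (A l) y :: real)" by (intro sum_nonneg) simp
  then show ?thesis using False assms by (simp add: wt_def)
qed

context snap
begin

interpretation prob_space M by (rule P)

definition pi :: "(nat \<Rightarrow> nat) \<Rightarrow> real" where
  "pi L = (\<integral>w. (\<Prod>k=1..n. wt (A k) (m k) p (L k) (X0 (t k) w)) \<partial>M)"

lemma wtX0_meas:
  assumes "L \<in> PiE {1..n} (\<lambda>k. {1..m k + 1})"
  shows "(\<lambda>w. \<Prod>k=1..n. wt (A k) (m k) p (L k) (X0 (t k) w)) \<in> borel_measurable M"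
proof (intro borel_measurable_prod)
  fix k assume k: "k \<in> {1..n}"
  have "wt (A k) (m k) p (L k) \<in> borel_measurable borel"
    by (rule wt_meas) (use A_borel[OF k] assms k in auto)
  then show "(\<lambda>w. wt (A k) (m k) p (L k) (X0 (t k) w)) \<in> borel_measurable M"
    by (rule measurable_compose[OF X0_meas[OF t_ge[OF k]]])
qed

lemma wtX0_int:
  assumes "L \<in> PiE {1..n} (\<lambda>k. {1..m k + 1})"
  shows "integrable M (\<lambda>w. \<Prod>k=1..n. wt (A k) (m k) p (L k) (X0 (t k) w))"
proof (rule integrable_const_bound[where B=1])
  show "AE w in M. norm (\<Prod>k=1..n. wt (A k) (m k) p (L k) (X0 (t k) w)) \<le> 1"
  proof (rule AE_I2)
    fix w
    have "0 \<le> (\<Prod>k=1..n. wt (A k) (m k) p (L k) (X0 (t k) w))"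
      by (intro prod_nonneg) (auto intro!: wt_nonneg[OF A_disj p])
    moreover have "(\<Prod>k=1..n. wt (A k) (m k) p (L k) (X0 (t k) w)) \<le> 1"
      by (intro prod_le_1 conjI) (auto intro!: wt_nonneg[OF A_disj p] wt_le1[OF p])
    ultimately show "norm (\<Prod>k=1..n. wt (A k) (m k) p (L k) (X0 (t k) w)) \<le> 1" by simp
  qed
qed (rule wtX0_meas[OF assms])

lemma pi_nonneg: "L \<in> PiE {1..n} (\<lambda>k. {1..m k + 1}) \<Longrightarrow> 0 \<le> pi L"
  unfolding pi_def by (intro Bochner_Integration.integral_nonneg prod_nonneg) (auto intro!: wt_nonneg[OF A_disj p])

lemma pi_sum: "(\<Sum>L\<in>PiE {1..n} (\<lambda>k. {1..m k + 1}). pi L) = 1"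
proof -
  have "(\<Sum>L\<in>PiE {1..n} (\<lambda>k. {1..m k + 1}). pi L)
      = (\<integral>w. (\<Sum>L\<in>PiE {1..n} (\<lambda>k. {1..m k + 1}). \<Prod>k=1..n. wt (A k) (m k) p (L k) (X0 (t k) w)) \<partial>M)"
    unfolding pi_def by (rule Bochner_Integration.integral_sum[symmetric]) (rule wtX0_int)
  also have "\<dots> = (\<integral>w. (\<Prod>k=1..n. \<Sum>l=1..m k + 1. wt (A k) (m k) p l (X0 (t k) w)) \<partial>M)"
    by (subst prod_sum_PiE) auto
  also have "\<dots> = (\<integral>w. 1 \<partial>M)"
    by (simp only: wt_sum prod.neutral_const)
  also have "\<dots> = 1" by (simp add: prob_space)
  finally show ?thesis .
qed

lemma step6:
  "(LINT w|M. H \<xi> (restrict (\<lambda>s. X0 s w) {t0..}))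
   = (\<Sum>L \<in> Pi\<^sub>E {1..n} (\<lambda>k. {1..m k + 1}).
        exp (\<i> * complex_of_real (\<Sum>k=1..n. \<xi> k (L k))) * complex_of_real (pi L))"
proof -
  let ?PE = "Pi\<^sub>E {1..n} (\<lambda>k. {1..m k + 1})"
  have eq: "H \<xi> (restrict (\<lambda>s. X0 s w) {t0..})
     = (\<Sum>L\<in>?PE. exp (\<i> * complex_of_real (\<Sum>k=1..n. \<xi> k (L k))) *
          complex_of_real (\<Prod>k=1..n. wt (A k) (m k) p (L k) (X0 (t k) w)))" for w
  proof -
    have "H \<xi> (restrict (\<lambda>s. X0 s w) {t0..}) = (\<Prod>k=1..n. g \<xi> k (X0 (t k) w))"
      unfolding H_def by (intro prod.cong refl) (use t_ge in auto)
    also have "\<dots> = (\<Sum>L\<in>?PE. \<Prod>k=1..n. exp (\<i> * complex_of_real (\<xi> k (L k))) *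
          complex_of_real (wt (A k) (m k) p (L k) (X0 (t k) w)))"
      unfolding g_def by (rule prod_sum_PiE) auto
    also have "\<dots> = (\<Sum>L\<in>?PE. exp (\<i> * complex_of_real (\<Sum>k=1..n. \<xi> k (L k))) *
          complex_of_real (\<Prod>k=1..n. wt (A k) (m k) p (L k) (X0 (t k) w)))"
    proof (intro sum.cong refl)
      fix L
      have "exp (\<i> * complex_of_real (\<Sum>k=1..n. \<xi> k (L k))) = (\<Prod>k=1..n. exp (\<i> * complex_of_real (\<xi> k (L k))))"
        unfolding of_real_sum sum_distrib_left by (rule exp_sum) simp
      then show "(\<Prod>k=1..n. exp (\<i> * complex_of_real (\<xi> k (L k))) *
          complex_of_real (wt (A k) (m k) p (L k) (X0 (t k) w))) =
          exp (\<i> * complex_of_real (\<Sum>k=1..n. \<xi> k (L k))) *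
          complex_of_real (\<Prod>k=1..n. wt (A k) (m k) p (L k) (X0 (t k) w))"
        by (simp add: prod.distrib of_real_prod)
    qed
    finally show ?thesis .
  qed
  have "(LINT w|M. H \<xi> (restrict (\<lambda>s. X0 s w) {t0..}))
      = (LINT w|M. (\<Sum>L\<in>?PE. exp (\<i> * complex_of_real (\<Sum>k=1..n. \<xi> k (L k))) *
          complex_of_real (\<Prod>k=1..n. wt (A k) (m k) p (L k) (X0 (t k) w))))"
    unfolding eq by (rule refl)
  also have "\<dots> = (\<Sum>L\<in>?PE. LINT w|M. exp (\<i> * complex_of_real (\<Sum>k=1..n. \<xi> k (L k))) *
          complex_of_real (\<Prod>k=1..n. wt (A k) (m k) p (L k) (X0 (t k) w)))"
    by (rule Bochner_Integration.integral_sum) (intro integrable_mult_right integrable_of_real wtX0_int)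
  also have "\<dots> = (\<Sum>L\<in>?PE. exp (\<i> * complex_of_real (\<Sum>k=1..n. \<xi> k (L k))) * complex_of_real (pi L))"
    by (intro sum.cong refl) (simp only: integral_mult_right_zero integral_complex_of_real pi_def)
  finally show ?thesis .
qed

lemma final:
  "\<exists>\<pi> :: (nat \<Rightarrow> nat) \<Rightarrow> real.
           (\<forall>L \<in> Pi\<^sub>E {1..n} (\<lambda>k. {1..m k + 1}). 0 \<le> \<pi> L)
         \<and> (\<Sum>L \<in> Pi\<^sub>E {1..n} (\<lambda>k. {1..m k + 1}). \<pi> L) = 1
         \<and> (\<forall>\<xi> :: nat \<Rightarrow> nat \<Rightarrow> real.
              (LINT w|M. exp (\<i> * complex_of_real
                   (\<Sum>k=1..n. \<Sum>l=1..m k + 1. \<xi> k l * snap_vec N Q t m A k l w)))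
            = (\<Sum>L \<in> Pi\<^sub>E {1..n} (\<lambda>k. {1..m k + 1}).
                  exp (\<i> * complex_of_real (\<Sum>k=1..n. \<xi> k (L k))) * complex_of_real (\<pi> L)) ^ N)"
proof (intro exI[of _ pi] conjI allI ballI)
  fix L assume "L \<in> Pi\<^sub>E {1..n} (\<lambda>k. {1..m k + 1})"
  then show "0 \<le> pi L" by (rule pi_nonneg)
next
  show "(\<Sum>L \<in> Pi\<^sub>E {1..n} (\<lambda>k. {1..m k + 1}). pi L) = 1" by (rule pi_sum)
next
  fix \<xi> :: "nat \<Rightarrow> nat \<Rightarrow> real"
  show "(LINT w|M. exp (\<i> * complex_of_real
                   (\<Sum>k=1..n. \<Sum>l=1..m k + 1. \<xi> k l * snap_vec N Q t m A k l w)))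
            = (\<Sum>L \<in> Pi\<^sub>E {1..n} (\<lambda>k. {1..m k + 1}).
                  exp (\<i> * complex_of_real (\<Sum>k=1..n. \<xi> k (L k))) * complex_of_real (pi L)) ^ N"
    unfolding step4 step5 step6 by (rule refl)
qed

end

theorem proposition6:
  fixes M :: "'a measure"
    and X :: "nat \<Rightarrow> real \<Rightarrow> 'a \<Rightarrow> real ^ 'd"
    and X0 :: "real \<Rightarrow> 'a \<Rightarrow> real ^ 'd"
    and Q :: "real \<Rightarrow> (real ^ 'd) set \<Rightarrow> 'a \<Rightarrow> nat"
    and N :: nat and p t0 :: real
    and n :: nat and t :: "nat \<Rightarrow> real" and m :: "nat \<Rightarrow> nat"
    and A :: "nat \<Rightarrow> nat \<Rightarrow> (real ^ 'd) set"
  assumes P: "prob_space M"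
    and p: "0 \<le> p" "p \<le> 1"
    and X0_meas: "\<And>s. t0 \<le> s \<Longrightarrow> X0 s \<in> borel_measurable M"
    and X_meas: "\<And>j s. j < N \<Longrightarrow> t0 \<le> s \<Longrightarrow> X j s \<in> borel_measurable M"
    and X_indep: "prob_space.indep_vars M (\<lambda>_. Pi\<^sub>M {t0..} (\<lambda>_. borel))
                    (\<lambda>j w. restrict (\<lambda>s. X j s w) {t0..}) {..<N}"
    and X_ident: "\<And>j. j < N \<Longrightarrow>
        distr M (Pi\<^sub>M {t0..} (\<lambda>_. borel)) (\<lambda>w. restrict (\<lambda>s. X j s w) {t0..})
      = distr M (Pi\<^sub>M {t0..} (\<lambda>_. borel)) (\<lambda>w. restrict (\<lambda>s. X0 s w) {t0..})"
    and Q_meas: "\<And>s B. t0 \<le> s \<Longrightarrow> B \<in> sets borel \<Longrightarrow> Q s B \<in> measurable M (count_space UNIV)"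
    and rule1: "snapshot_rule1 M (snapshot_sigma M N t0 X) Q t0"
    and rule2: "snapshot_rule2 M (snapshot_sigma M N t0 X) N X Q p t0"
    and t_dist: "inj_on t {1..n}"
    and t_ge: "\<And>k. k \<in> {1..n} \<Longrightarrow> t0 \<le> t k"
    and A_borel: "\<And>k l. k \<in> {1..n} \<Longrightarrow> l \<in> {1..m k} \<Longrightarrow> A k l \<in> sets borel"
    and A_disj: "\<And>k. k \<in> {1..n} \<Longrightarrow> disjoint_family_on (A k) {1..m k}"
  shows "\<exists>\<pi> :: (nat \<Rightarrow> nat) \<Rightarrow> real.
           (\<forall>L \<in> Pi\<^sub>E {1..n} (\<lambda>k. {1..m k + 1}). 0 \<le> \<pi> L)
         \<and> (\<Sum>L \<in> Pi\<^sub>E {1..n} (\<lambda>k. {1..m k + 1}). \<pi> L) = 1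
         \<and> (\<forall>\<xi> :: nat \<Rightarrow> nat \<Rightarrow> real.
              (LINT w|M. exp (\<i> * complex_of_real
                   (\<Sum>k=1..n. \<Sum>l=1..m k + 1. \<xi> k l * snap_vec N Q t m A k l w)))
            = (\<Sum>L \<in> Pi\<^sub>E {1..n} (\<lambda>k. {1..m k + 1}).
                  exp (\<i> * complex_of_real (\<Sum>k=1..n. \<xi> k (L k))) * complex_of_real (\<pi> L)) ^ N)"
  proof -
  interpret snap M X X0 Q N p t0 n t m A
    by (rule snap.intro) (fact assms)+
  show ?thesis by (rule final)
qed

end
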